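(* Let $X\in\mathbb{R}^{n\times m}$ ($m\ge n$) be a full rank matrix, and let $\mathcal S\subseteq[m]$ be any subset of cardinality $k$ ($n\le k\le m$) such that $X_{\mathcal S}$ is full rank. For $i=1,\dots,n$, let $Y_i\in\mathbb{R}^{(n-1)\times m}$ be the matrix obtained from $X$ by removing its $i$-th row. Then $$\|X_{\mathcal S}^{\dagger}\|_F^2=\frac{\sum_{i=1}^n\det\big((Y_i)_{\mathcal S}(Y_i)_{\mathcal S}^T\big)}{\det\big(X_{\mathcal S}X_{\mathcal S}^T\big)}.$$ Moreover, writing $X=[x_1,\dots,x_m]$ in columns, if $\mathcal S$ has cardinality exactly $n$ then $$\|X_{\mathcal S}^{-1}\|_F^2\le \|X^{\dagger}\|_2^2\cdot\frac{\sum_{j=1}^m\sum_{i=1}^n\det\big(X_{\mathcal S}(i\to x_j)\big)^2}{\det(X_{\mathcal S})^2},$$ and if $X$ has orthonormal rows this inequality is an equality.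
   Context: $[m]=\{1,\dots,m\}$; for $\mathcal S\subseteq[m]$, $X_{\mathcal S}$ (resp. $(Y_i)_{\mathcal S}$) is the submatrix of columns indexed by $\mathcal S$, in increasing order. $A^\dagger$ is the Moore–Penrose pseudo-inverse; $\|\cdot\|_2,\|\cdot\|_F$ spectral and Frobenius norms. For a square matrix $A$, index $i$ and vector $v$, $A(i\to v)$ denotes the matrix obtained by replacing the $i$-th column of $A$ by $v$. *)

theory Defs
  imports "Jordan_Normal_Form.Determinant" "Jordan_Normal_Form.DL_Rank"
          "Jordan_Normal_Form.DL_Submatrix" Complex_Main
begin

definition full_rank :: "real mat \<Rightarrow> bool" where
  "full_rank A \<longleftrightarrow> vec_space.rank (dim_row A) A = min (dim_row A) (dim_col A)"

definition pinv :: "real mat \<Rightarrow> real mat" where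
  "pinv A = (THE B. B \<in> carrier_mat (dim_col A) (dim_row A) \<and>
                    A * B * A = A \<and> B * A * B = B \<and>
                    transpose_mat (A * B) = A * B \<and> transpose_mat (B * A) = B * A)"

definition vnorm :: "real vec \<Rightarrow> real" where
  "vnorm v = sqrt (v \<bullet> v)"

definition frob_norm :: "real mat \<Rightarrow> real" where
  "frob_norm A = sqrt (\<Sum>i<dim_row A. \<Sum>j<dim_col A. (A $$ (i,j))^2)"

definition spec_norm :: "real mat \<Rightarrow> real" where
  "spec_norm A = Sup {vnorm (A *\<^sub>v v) | v. v \<in> carrier_vec (dim_col A) \<and> vnorm v \<le> 1}"

text \<open>Columns indexed by S, in increasing order.\<close>
definition cols_sub :: "real mat \<Rightarrow> nat set \<Rightarrow> real mat" where
  "cols_sub A S = submatrix A UNIV S"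

definition del_row :: "real mat \<Rightarrow> nat \<Rightarrow> real mat" where
  "del_row A i = submatrix A (UNIV - {i}) UNIV"

end

theory Submission imports Defs "Jordan_Normal_Form.VS_Connect" begin

lemma (in vec_space) rank_full_surj:
  assumes M: "M \<in> carrier_mat n p" and r: "rank M = n" and v: "v \<in> carrier_vec n"
  shows "\<exists>x \<in> carrier_vec p. M *\<^sub>v x = v"
proof -
  obtain S where S: "maximal S (\<lambda>T. T \<subseteq> set (cols M) \<and> lin_indpt T)"
    using maximal_exists[of "(\<lambda>T. T \<subseteq> set (cols M) \<and> lin_indpt T)" "card (set (cols M))" "{}"]
    by (meson List.finite_set card_mono empty_iff empty_subsetI finite_lin_indpt2 rev_finite_subset)
  have cS: "card S = n" using rank_card_indpt[OF M S] r by simp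
  have Ssub: "S \<subseteq> set (cols M)" "lin_indpt S" using S unfolding maximal_def by auto
  have colsC: "set (cols M) \<subseteq> carrier_vec n" using M cols_dim by blast
  have fin: "finite S" using Ssub(1) finite_subset by blast
  have "basis S" by (rule dim_li_is_basis, rule fin_dim, rule fin, use Ssub colsC in auto, simp add: dim_is_n cS)
  then have sp: "span S = carrier V" unfolding basis_def by auto
  have "span S \<subseteq> span (set (cols M))" by (rule span_is_monotone) (rule Ssub)
  hence "v \<in> col_space M" unfolding col_space_def using sp v by auto
  then show ?thesis using col_space_eq[OF M] M by auto
qed


lemma scal_self_sum: "(w::real vec) \<bullet> w = (\<Sum>i<dim_vec w. (w$i)^2)"
  unfolding scalar_prod_def by (simp add: power2_eq_square lessThan_atLeast0)

lemma scal_self_nonneg: "(w::real vec) \<bullet> w \<ge> 0"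
  unfolding scal_self_sum by (simp add: sum_nonneg)

lemma scal_self_zero: assumes "(w::real vec) \<bullet> w = 0" shows "w = 0\<^sub>v (dim_vec w)"
proof -
  have "\<forall>i\<in>{..<dim_vec w}. (w$i)^2 = 0"
    using assms unfolding scal_self_sum by (subst sum_nonneg_eq_0_iff[symmetric]) auto
  then show ?thesis by (intro eq_vecI) auto
qed

lemma mat_vec_scal:
  fixes M :: "real mat"
  assumes M: "M \<in> carrier_mat n p" and v: "v \<in> carrier_vec n" and x: "x \<in> carrier_vec p"
  shows "(M *\<^sub>v x) \<bullet> v = x \<bullet> (transpose_mat M *\<^sub>v v)"
proof -
  have "(M *\<^sub>v x) \<bullet> v = (\<Sum>i<n. (\<Sum>j<p. M $$ (i,j) * x $ j) * v $ i)"
    using M v x by (auto simp: scalar_prod_def mult_mat_vec_def lessThan_atLeast0 intro!: sum.cong)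
  also have "\<dots> = (\<Sum>j<p. x $ j * (\<Sum>i<n. M $$ (i,j) * v $ i))"
    unfolding sum_distrib_left sum_distrib_right by (subst sum.swap) (auto intro!: sum.cong simp: mult.commute mult.left_commute)
  also have "\<dots> = x \<bullet> (transpose_mat M *\<^sub>v v)"
    using M v x by (auto simp: scalar_prod_def mult_mat_vec_def lessThan_atLeast0 intro!: sum.cong)
  finally show ?thesis .
qed

lemma cs_sum:
  fixes a b :: "nat \<Rightarrow> real"
  shows "(\<Sum>i\<in>I. a i * b i)^2 \<le> (\<Sum>i\<in>I. (a i)^2) * (\<Sum>i\<in>I. (b i)^2)"
proof -
  define A where "A = (\<Sum>i\<in>I. (a i)^2)"
  define B where "B = (\<Sum>i\<in>I. (b i)^2)"
  define C where "C = (\<Sum>i\<in>I. a i * b i)"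
  have B0: "B \<ge> 0" unfolding B_def by (simp add: sum_nonneg)
  have "0 \<le> (\<Sum>i\<in>I. (B * a i - C * b i)^2)" by (simp add: sum_nonneg)
  also have "\<dots> = (\<Sum>i\<in>I. B^2 * (a i)^2 - 2 * B * C * (a i * b i) + C^2 * (b i)^2)"
    by (rule sum.cong) (auto simp: power2_eq_square algebra_simps)
  also have "\<dots> = B^2 * A - 2 * B * C * C + C^2 * B"
    unfolding A_def B_def C_def by (simp add: sum.distrib sum_subtractf sum_distrib_left)
  also have "\<dots> = B * (A * B - C^2)" by (simp add: power2_eq_square algebra_simps)
  finally have 1: "0 \<le> B * (A * B - C^2)" .
  show ?thesis
  proof (cases "B = 0")
    case True
    show ?thesis
    proof (cases "finite I")
      case True
      with \<open>B = 0\<close> have "\<forall>i\<in>I. (b i)^2 = 0" unfolding B_def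
        by (subst sum_nonneg_eq_0_iff[symmetric]) auto
      then have "C = 0" unfolding C_def by auto
      then show ?thesis unfolding A_def[symmetric] B_def[symmetric] C_def[symmetric] using \<open>B = 0\<close> by simp
    next
      case False then show ?thesis by simp
    qed
  next
    case False
    with B0 have "B > 0" by simp
    with 1 have "A * B - C^2 \<ge> 0" by (simp add: zero_le_mult_iff)
    then show ?thesis unfolding A_def[symmetric] B_def[symmetric] C_def[symmetric] by (simp add: mult.commute)
  qed
qed

lemma cs_vec:
  fixes v w :: "real vec"
  assumes "dim_vec v = dim_vec w"
  shows "(v \<bullet> w)^2 \<le> (v \<bullet> v) * (w \<bullet> w)"
  using cs_sum[of "\<lambda>i. v$i" "\<lambda>i. w$i" "{0..<dim_vec w}"] assms unfolding scalar_prod_def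
  by (simp add: power2_eq_square)

lemma cs_vec_abs:
  fixes v w :: "real vec"
  assumes "dim_vec v = dim_vec w"
  shows "v \<bullet> w \<le> sqrt (v \<bullet> v) * sqrt (w \<bullet> w)"
proof -
  have "\<bar>v \<bullet> w\<bar> = sqrt ((v \<bullet> w)^2)" by simp
  also have "\<dots> \<le> sqrt ((v \<bullet> v) * (w \<bullet> w))" using cs_vec[OF assms] real_sqrt_le_iff by blast
  also have "\<dots> = sqrt (v \<bullet> v) * sqrt (w \<bullet> w)" by (simp add: real_sqrt_mult)
  finally show ?thesis by simp
qed

lemma gram_det_nz:
  fixes M :: "real mat"
  assumes M: "M \<in> carrier_mat n p" and r: "vec_space.rank n M = n"
  shows "det (M * transpose_mat M) \<noteq> 0"
proof
  assume "det (M * transpose_mat M) = 0"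
  then obtain v where v: "v \<in> carrier_vec n" "v \<noteq> 0\<^sub>v n" "(M * transpose_mat M) *\<^sub>v v = 0\<^sub>v n"
    using det_0_iff_vec_prod_zero[of "M * transpose_mat M" n] M by auto
  define w where "w = transpose_mat M *\<^sub>v v"
  have w: "w \<in> carrier_vec p" using M v unfolding w_def by auto
  have "M *\<^sub>v w = 0\<^sub>v n" using v M unfolding w_def by (metis assoc_mult_mat_vec transpose_carrier_mat)
  then have "w \<bullet> w = 0" using mat_vec_scal[OF M v(1) w] v w unfolding w_def[symmetric] by simp
  then have w0: "w = 0\<^sub>v p" using scal_self_zero[of w] w by auto
  obtain x where x: "x \<in> carrier_vec p" "M *\<^sub>v x = v" using vec_space.rank_full_surj[OF M r v(1)] by auto
  have "v \<bullet> v = x \<bullet> w" using mat_vec_scal[OF M v(1) x(1)] x unfolding w_def by simp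
  also have "\<dots> = 0" using w0 x by simp
  finally have "v = 0\<^sub>v n" using scal_self_zero[of v] v by auto
  with v show False by simp
qed


lemma pinv_full_row:
  fixes M :: "real mat"
  assumes M: "M \<in> carrier_mat n p" and d: "det (M * transpose_mat M) \<noteq> 0"
  defines "G \<equiv> M * transpose_mat M"
  defines "H \<equiv> (1 / det G) \<cdot>\<^sub>m adj_mat G"
  shows "H \<in> carrier_mat n n" "G * H = 1\<^sub>m n" "H * G = 1\<^sub>m n" "transpose_mat H = H"
    "pinv M = transpose_mat M * H" "M * pinv M = 1\<^sub>m n"
proof -
  have MT: "transpose_mat M \<in> carrier_mat p n" using M by auto
  have G: "G \<in> carrier_mat n n" unfolding G_def using M by auto
  show H: "H \<in> carrier_mat n n" unfolding H_def using adj_mat(1)[OF G] by auto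
  have "G * H = (1 / det G) \<cdot>\<^sub>m (G * adj_mat G)"
    unfolding H_def by (rule mult_smult_distrib[OF G adj_mat(1)[OF G]])
  also have "\<dots> = (1 / det G) \<cdot>\<^sub>m (det G \<cdot>\<^sub>m 1\<^sub>m n)" using adj_mat(2)[OF G] by simp
  also have "\<dots> = 1\<^sub>m n" using d unfolding G_def[symmetric] by (intro eq_matI) auto
  finally show GH: "G * H = 1\<^sub>m n" .
  show HG: "H * G = 1\<^sub>m n" by (rule mat_mult_left_right_inverse[OF G H GH])
  have GT: "transpose_mat G = G" unfolding G_def using transpose_mult[OF M MT] by simp
  have HTG: "transpose_mat H * G = 1\<^sub>m n"
  proof -
    have "transpose_mat H * G = transpose_mat H * transpose_mat G" using GT by simp
    also have "\<dots> = transpose_mat (G * H)" using transpose_mult[OF G H] by simp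
    finally show ?thesis using GH by simp
  qed
  have HT: "transpose_mat H \<in> carrier_mat n n" using H by auto
  have "transpose_mat H = transpose_mat H * (G * H)" using GH HT by simp
  also have "\<dots> = (transpose_mat H * G) * H" using HT G H by simp
  finally show HTH: "transpose_mat H = H" using HTG H by simp
  define Q where "Q = transpose_mat M * H"
  have Q: "Q \<in> carrier_mat p n" unfolding Q_def using MT H by auto
  have MQ: "M * Q = 1\<^sub>m n" unfolding Q_def using M MT H GH unfolding G_def by simp
  have c1: "M * Q * M = M" using MQ M by simp
  have c2: "Q * M * Q = Q" using MQ M Q by simp
  have c3: "transpose_mat (M * Q) = M * Q" using MQ by simp
  have c4: "transpose_mat (Q * M) = Q * M"
  proof -
    have "transpose_mat (Q * M) = transpose_mat M * transpose_mat Q" using transpose_mult[OF Q M] .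
    also have "transpose_mat Q = H * M" unfolding Q_def using transpose_mult[OF MT H] HTH by simp
    finally show ?thesis unfolding Q_def using MT H M by simp
  qed
  have uniq: "B = Q" if B: "B \<in> carrier_mat p n" and b1: "M * B * M = M" and b2: "B * M * B = B"
    and b4: "transpose_mat (B * M) = B * M" for B
  proof -
    have MB: "M * B = 1\<^sub>m n"
    proof -
      have "M * B = (M * B) * (M * Q)" using MQ M B by simp
      also have "\<dots> = (M * B * M) * Q" by (rule assoc_mult_mat[OF mult_carrier_mat[OF M B] M Q, symmetric])
      finally show ?thesis using b1 MQ by simp
    qed
    have BT: "transpose_mat B \<in> carrier_mat n p" using B by auto
    define C where "C = transpose_mat B * B"
    have C: "C \<in> carrier_mat n n" unfolding C_def using B by auto
    have "B = (B * M) * B" using b2 by simp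
    also have "\<dots> = transpose_mat (B * M) * B" using b4 by simp
    also have "\<dots> = (transpose_mat M * transpose_mat B) * B" using transpose_mult[OF B M] by simp
    also have "\<dots> = transpose_mat M * C" unfolding C_def using MT BT B by simp
    finally have BC: "B = transpose_mat M * C" .
    have GC: "G * C = 1\<^sub>m n" unfolding G_def using MB BC M MT C by simp
    have "C = (H * G) * C" using HG C by simp
    also have "\<dots> = H" using GC H G C by simp
    finally show ?thesis using BC unfolding Q_def by simp
  qed
  have dims: "dim_col M = p" "dim_row M = n" using M by auto
  have "pinv M = Q" unfolding pinv_def dims
  proof (rule the_equality)
    show "Q \<in> carrier_mat p n \<and> M * Q * M = M \<and> Q * M * Q = Q \<and>
      transpose_mat (M * Q) = M * Q \<and> transpose_mat (Q * M) = Q * M"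
      using Q c1 c2 c3 c4 by blast
  next
    fix B assume "B \<in> carrier_mat p n \<and> M * B * M = M \<and> B * M * B = B \<and>
      transpose_mat (M * B) = M * B \<and> transpose_mat (B * M) = B * M"
    then show "B = Q" using uniq by blast
  qed
  then show "pinv M = transpose_mat M * H" "M * pinv M = 1\<^sub>m n" using MQ unfolding Q_def by auto
qed


lemma frob_sq: "(frob_norm A)^2 = (\<Sum>i<dim_row A. \<Sum>j<dim_col A. (A $$ (i,j))^2)"
  unfolding frob_norm_def by (simp add: sum_nonneg)

lemma part1_core:
  fixes M :: "real mat"
  assumes M: "M \<in> carrier_mat n p" and d: "det (M * transpose_mat M) \<noteq> 0"
  shows "(frob_norm (pinv M))^2 = (\<Sum>i<n. det (mat_delete (M * transpose_mat M) i i)) / det (M * transpose_mat M)"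
proof -
  define G where "G = M * transpose_mat M"
  define H where "H = (1 / det G) \<cdot>\<^sub>m adj_mat G"
  note P = pinv_full_row[OF M d, folded G_def, folded H_def]
  have MT: "transpose_mat M \<in> carrier_mat p n" using M by auto
  have G: "G \<in> carrier_mat n n" unfolding G_def using M by auto
  define Q where "Q = pinv M"
  have QH: "Q = transpose_mat M * H" unfolding Q_def using P(5) .
  have Q: "Q \<in> carrier_mat p n" unfolding QH using MT P(1) by auto
  have QT: "transpose_mat Q = H * M" unfolding QH using transpose_mult[OF MT P(1)] P(4) by simp
  have QTQ: "transpose_mat Q * Q = H"
  proof -
    have "transpose_mat Q * Q = (H * M) * Q" using QT by simp
    also have "\<dots> = (H * M) * (transpose_mat M * H)" using QH by simp
    also have "\<dots> = H * (M * (transpose_mat M * H))" by (rule assoc_mult_mat[OF P(1) M mult_carrier_mat[OF MT P(1)]])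
    also have "\<dots> = H * (G * H)" unfolding G_def using M MT P(1) by simp
    finally show ?thesis using P(2) P(1) by simp
  qed
  have "(frob_norm Q)^2 = (\<Sum>a<p. \<Sum>b<n. (Q $$ (a,b))^2)" unfolding frob_sq using Q by simp
  also have "\<dots> = (\<Sum>b<n. \<Sum>a<p. Q $$ (a,b) * Q $$ (a,b))" by (subst sum.swap) (simp add: power2_eq_square)
  also have "\<dots> = (\<Sum>b<n. (transpose_mat Q * Q) $$ (b,b))" using Q
    by (auto simp: scalar_prod_def lessThan_atLeast0 intro!: sum.cong)
  also have "\<dots> = (\<Sum>b<n. det (mat_delete G b b) / det G)" unfolding QTQ H_def using G
    by (auto simp: adj_mat_def cofactor_def intro!: sum.cong)
  also have "\<dots> = (\<Sum>b<n. det (mat_delete G b b)) / det G" by (simp add: sum_divide_distrib)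
  finally show ?thesis unfolding Q_def G_def .
qed


lemma pick_del: "pick (UNIV - {i}) r = insert_index i r"
proof (induction r)
  case 0
  show ?case by (cases "i = 0") (auto intro!: Least_equality simp: insert_index_def)
next
  case (Suc r)
  show ?case unfolding pick.simps Suc
    by (rule Least_equality) (auto simp: insert_index_def split: if_splits)
qed

lemma card_del: "i < n \<Longrightarrow> card {r. r < n \<and> r \<in> UNIV - {i}} = n - 1"
proof -
  assume "i < n"
  have "{r. r < n \<and> r \<in> UNIV - {i}} = {..<n} - {i}" by auto
  then show ?thesis using \<open>i < n\<close> by simp
qed

lemma del_row_dims:
  assumes X: "X \<in> carrier_mat n m" and i: "i < n"
  shows "del_row X i \<in> carrier_mat (n - 1) m"
proof -
  have d: "dim_row X = n" "dim_col X = m" using X by auto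
  show ?thesis unfolding del_row_def
  proof (rule carrier_matI)
    show "dim_row (submatrix X (UNIV - {i}) UNIV) = n - 1" unfolding dim_submatrix d by (rule card_del[OF i])
    show "dim_col (submatrix X (UNIV - {i}) UNIV) = m" unfolding dim_submatrix d by simp
  qed
qed

lemma cols_sub_dims:
  assumes X: "X \<in> carrier_mat n m"
  shows "cols_sub X S \<in> carrier_mat n (card {j. j < m \<and> j \<in> S})"
proof -
  have d: "dim_row X = n" "dim_col X = m" using X by auto
  show ?thesis unfolding cols_sub_def
    by (rule carrier_matI) (simp_all only: dim_submatrix d, simp)
qed

lemma cols_sub_index:
  assumes X: "X \<in> carrier_mat n m" and a: "a < n" and c: "c < card {j. j < m \<and> j \<in> S}"
  shows "cols_sub X S $$ (a, c) = X $$ (a, pick S c)"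
  unfolding cols_sub_def using X a c by (subst submatrix_index) (auto simp: pick_UNIV)

lemma del_row_index:
  assumes X: "X \<in> carrier_mat n m" and i: "i < n" and r: "r < n - 1" and c: "c < m"
  shows "del_row X i $$ (r, c) = X $$ (insert_index i r, c)"
  unfolding del_row_def using X r c card_del[OF i] by (subst submatrix_index) (auto simp: pick_UNIV pick_del)

lemma gram_index:
  fixes B :: "real mat"
  assumes B: "B \<in> carrier_mat r k" and a: "a < r" and b: "b < r"
  shows "(B * transpose_mat B) $$ (a,b) = (\<Sum>c<k. B $$ (a,c) * B $$ (b,c))"
proof -
  have "(B * transpose_mat B) $$ (a,b) = row B a \<bullet> col (transpose_mat B) b"
    using B a b by (simp add: index_mult_mat)
  also have "\<dots> = (\<Sum>c\<in>{0..<k}. row B a $ c * col (transpose_mat B) b $ c)"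
    unfolding scalar_prod_def using B by simp
  also have "\<dots> = (\<Sum>c<k. B $$ (a,c) * B $$ (b,c))"
    unfolding lessThan_atLeast0[symmetric] using B a b by (intro sum.cong) auto
  finally show ?thesis .
qed

lemma del_cols_gram:
  assumes X: "X \<in> carrier_mat n m" and i: "i < n"
  shows "cols_sub (del_row X i) S * transpose_mat (cols_sub (del_row X i) S)
       = mat_delete (cols_sub X S * transpose_mat (cols_sub X S)) i i"
proof -
  define k' where "k' = card {j. j < m \<and> j \<in> S}"
  have D: "del_row X i \<in> carrier_mat (n - 1) m" using del_row_dims[OF X i] .
  have A: "cols_sub (del_row X i) S \<in> carrier_mat (n - 1) k'" using cols_sub_dims[OF D] unfolding k'_def .
  have B: "cols_sub X S \<in> carrier_mat n k'" using cols_sub_dims[OF X] unfolding k'_def .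
  have pk: "pick S c < m" if "c < k'" for c using pick_le that unfolding k'_def by blast
  have ins: "insert_index i r < n" if "r < n - 1" for r using that i by (auto simp: insert_index_def)
  have eA: "cols_sub (del_row X i) S $$ (r, c) = X $$ (insert_index i r, pick S c)" if "r < n - 1" "c < k'" for r c
    using cols_sub_index[OF D that(1), of c S] that k'_def del_row_index[OF X i that(1) pk[OF that(2)]] by simp
  have eB: "cols_sub X S $$ (a, c) = X $$ (a, pick S c)" if "a < n" "c < k'" for a c
    using cols_sub_index[OF X that(1)] that k'_def by simp
  show ?thesis
  proof (rule eq_matI)
    fix r s assume r: "r < dim_row (mat_delete (cols_sub X S * transpose_mat (cols_sub X S)) i i)"
      and s: "s < dim_col (mat_delete (cols_sub X S * transpose_mat (cols_sub X S)) i i)"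
    have r': "r < n - 1" and s': "s < n - 1" using r s B by auto
    have "(mat_delete (cols_sub X S * transpose_mat (cols_sub X S)) i i) $$ (r, s)
        = (cols_sub X S * transpose_mat (cols_sub X S)) $$ (insert_index i r, insert_index i s)"
      unfolding mat_delete_def insert_index_def using r' s' B by auto
    also have "\<dots> = (\<Sum>c<k'. X $$ (insert_index i r, pick S c) * X $$ (insert_index i s, pick S c))"
      unfolding gram_index[OF B ins[OF r'] ins[OF s']] by (rule sum.cong[OF refl]) (simp only: lessThan_iff eB[OF ins[OF r']] eB[OF ins[OF s']])
    also have "\<dots> = (cols_sub (del_row X i) S * transpose_mat (cols_sub (del_row X i) S)) $$ (r, s)"
      unfolding gram_index[OF A r' s'] by (rule sum.cong[OF refl]) (simp only: lessThan_iff eA[OF r'] eA[OF s'])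
    finally show "(cols_sub (del_row X i) S * transpose_mat (cols_sub (del_row X i) S)) $$ (r, s) =
         (mat_delete (cols_sub X S * transpose_mat (cols_sub X S)) i i) $$ (r, s)" by (rule sym)
  next
    show "dim_row (cols_sub (del_row X i) S * transpose_mat (cols_sub (del_row X i) S)) =
      dim_row (mat_delete (cols_sub X S * transpose_mat (cols_sub X S)) i i)" using A B by simp
  next
    show "dim_col (cols_sub (del_row X i) S * transpose_mat (cols_sub (del_row X i) S)) =
      dim_col (mat_delete (cols_sub X S * transpose_mat (cols_sub X S)) i i)" using A B by simp
  qed
qed


lemma spec_le:
  fixes P :: "real mat"
  assumes P: "P \<in> carrier_mat m n"
  shows "spec_norm P \<ge> 0" "v \<in> carrier_vec n \<Longrightarrow> (P *\<^sub>v v) \<bullet> (P *\<^sub>v v) \<le> (spec_norm P)^2 * (v \<bullet> v)"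
proof -
  define T where "T = {vnorm (P *\<^sub>v v) | v. v \<in> carrier_vec (dim_col P) \<and> vnorm v \<le> 1}"
  have sT: "spec_norm P = Sup T" unfolding spec_norm_def T_def ..
  have dP: "dim_col P = n" "dim_row P = m" using P by auto
  define F where "F = (\<Sum>i<m. row P i \<bullet> row P i)"
  have F0: "F \<ge> 0" unfolding F_def by (rule sum_nonneg) (rule scal_self_nonneg)
  have bound: "(P *\<^sub>v v) \<bullet> (P *\<^sub>v v) \<le> F * (v \<bullet> v)" if v: "v \<in> carrier_vec n" for v
  proof -
    have Pv: "P *\<^sub>v v \<in> carrier_vec m" using P v by simp
    have "(P *\<^sub>v v) \<bullet> (P *\<^sub>v v) = (\<Sum>i<m. (row P i \<bullet> v)^2)" unfolding scal_self_sum using dP by simp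
    also have "\<dots> \<le> (\<Sum>i<m. (row P i \<bullet> row P i) * (v \<bullet> v))"
      by (rule sum_mono) (rule cs_vec, use dP v in simp)
    also have "\<dots> = F * (v \<bullet> v)" unfolding F_def by (simp add: sum_distrib_right)
    finally show ?thesis .
  qed
  have bdd: "bdd_above T"
  proof (rule bdd_aboveI[of _ "sqrt F"])
    fix x assume "x \<in> T"
    then obtain v where v: "v \<in> carrier_vec n" "vnorm v \<le> 1" and x: "x = vnorm (P *\<^sub>v v)"
      unfolding T_def dP by auto
    have vv: "v \<bullet> v \<le> 1" using v(2) unfolding vnorm_def by simp
    have "x = sqrt ((P *\<^sub>v v) \<bullet> (P *\<^sub>v v))" unfolding x vnorm_def ..
    also have "\<dots> \<le> sqrt (F * (v \<bullet> v))" using bound[OF v(1)] by simp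
    also have "\<dots> \<le> sqrt F" using vv F0 scal_self_nonneg[of v] by (simp add: mult_left_le)
    finally show "x \<le> sqrt F" .
  qed
  have mem: "vnorm (P *\<^sub>v v) \<le> Sup T" if "v \<in> carrier_vec n" "vnorm v \<le> 1" for v
    by (rule cSup_upper[OF _ bdd]) (use that dP in \<open>auto simp: T_def\<close>)
  have P0: "P *\<^sub>v 0\<^sub>v n = 0\<^sub>v m" using P by (intro eq_vecI) auto
  have z: "vnorm (P *\<^sub>v 0\<^sub>v n) = 0" "vnorm (0\<^sub>v n) = 0" unfolding P0 by (auto simp: vnorm_def)
  have s0: "0 \<le> Sup T" using mem[of "0\<^sub>v n"] z by simp
  then show "spec_norm P \<ge> 0" unfolding sT .
  assume v: "v \<in> carrier_vec n"
  show "(P *\<^sub>v v) \<bullet> (P *\<^sub>v v) \<le> (spec_norm P)^2 * (v \<bullet> v)"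
  proof (cases "v \<bullet> v = 0")
    case True
    then have "v = 0\<^sub>v n" using scal_self_zero[of v] v by auto
    then show ?thesis using P0 by simp
  next
    case False
    define r where "r = sqrt (v \<bullet> v)"
    have r0: "r > 0" unfolding r_def using False scal_self_nonneg[of v] by simp
    have r2: "r^2 = v \<bullet> v" unfolding r_def using scal_self_nonneg[of v] by simp
    define u where "u = (1 / r) \<cdot>\<^sub>v v"
    have u: "u \<in> carrier_vec n" unfolding u_def using v by simp
    have "u \<bullet> u = (1/r)^2 * (v \<bullet> v)" unfolding u_def using v by (simp add: power2_eq_square)
    also have "\<dots> = 1" using r2 r0 False by (simp add: field_simps)
    finally have uu: "u \<bullet> u = 1" .
    have "vnorm u \<le> 1" unfolding vnorm_def uu by simp
    from mem[OF u this] have le: "vnorm (P *\<^sub>v u) \<le> Sup T" .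
    have Pu: "P *\<^sub>v u = (1/r) \<cdot>\<^sub>v (P *\<^sub>v v)" unfolding u_def using mult_mat_vec[OF P v] .
    have Pv: "P *\<^sub>v v \<in> carrier_vec m" using P v by simp
    have "(P *\<^sub>v u) \<bullet> (P *\<^sub>v u) = (1/r)^2 * ((P *\<^sub>v v) \<bullet> (P *\<^sub>v v))"
      unfolding Pu using Pv by (simp add: power2_eq_square)
    moreover have "(P *\<^sub>v u) \<bullet> (P *\<^sub>v u) = (vnorm (P *\<^sub>v u))^2"
      unfolding vnorm_def using scal_self_nonneg by simp
    moreover have "(vnorm (P *\<^sub>v u))^2 \<le> (Sup T)^2"
      using le by (rule power_mono) (simp add: vnorm_def scal_self_nonneg)
    ultimately have "(1/r)^2 * ((P *\<^sub>v v) \<bullet> (P *\<^sub>v v)) \<le> (Sup T)^2" by simp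
    then have "(P *\<^sub>v v) \<bullet> (P *\<^sub>v v) \<le> (Sup T)^2 * r^2" using r0
      by (simp add: field_simps power2_eq_square)
    then show ?thesis unfolding sT r2 .
  qed
qed

lemma spec_le_T:
  fixes P :: "real mat"
  assumes P: "P \<in> carrier_mat m n" and w: "w \<in> carrier_vec m"
  shows "(transpose_mat P *\<^sub>v w) \<bullet> (transpose_mat P *\<^sub>v w) \<le> (spec_norm P)^2 * (w \<bullet> w)"
proof -
  define s where "s = spec_norm P"
  have s0: "s \<ge> 0" unfolding s_def using spec_le(1)[OF P] .
  define u where "u = transpose_mat P *\<^sub>v w"
  have u: "u \<in> carrier_vec n" unfolding u_def using P w by simp
  have Pu: "P *\<^sub>v u \<in> carrier_vec m" using P u by simp
  define a where "a = sqrt (u \<bullet> u)"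
  define b where "b = sqrt (w \<bullet> w)"
  have a0: "a \<ge> 0" and b0: "b \<ge> 0" unfolding a_def b_def by (auto simp: scal_self_nonneg)
  have a2: "a^2 = u \<bullet> u" unfolding a_def using scal_self_nonneg[of u] by simp
  have b2: "b^2 = w \<bullet> w" unfolding b_def using scal_self_nonneg[of w] by simp
  have "u \<bullet> u = (P *\<^sub>v u) \<bullet> w" using mat_vec_scal[OF P w u] unfolding u_def by simp
  also have "\<dots> \<le> sqrt ((P *\<^sub>v u) \<bullet> (P *\<^sub>v u)) * b" unfolding b_def
    by (rule cs_vec_abs) (use Pu w P in simp)
  also have "sqrt ((P *\<^sub>v u) \<bullet> (P *\<^sub>v u)) \<le> s * a"
  proof -
    have "sqrt ((P *\<^sub>v u) \<bullet> (P *\<^sub>v u)) \<le> sqrt (s^2 * (u \<bullet> u))"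
      using spec_le(2)[OF P u] unfolding s_def by simp
    also have "\<dots> = s * a" unfolding a_def using s0 by (simp add: real_sqrt_mult)
    finally show ?thesis .
  qed
  then have "sqrt ((P *\<^sub>v u) \<bullet> (P *\<^sub>v u)) * b \<le> s * a * b" using b0 by (rule mult_right_mono)
  finally have ineq: "a^2 \<le> s * a * b" unfolding a2 .
  have "a \<le> s * b"
  proof (cases "a = 0")
    case True then show ?thesis using s0 b0 by simp
  next
    case False
    with a0 have "a > 0" by simp
    with ineq show ?thesis by (simp add: power2_eq_square mult.assoc)
  qed
  then have "a^2 \<le> (s * b)^2" using a0 by (rule power_mono)
  then show ?thesis unfolding u_def[symmetric] s_def[symmetric] a2 power_mult_distrib b2 .
qed


lemma row_self_sum:
  fixes A :: "real mat"
  assumes A: "A \<in> carrier_mat r c" and i: "i < r"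
  shows "row A i \<bullet> row A i = (\<Sum>j<c. (A $$ (i,j))^2)"
  unfolding scal_self_sum using A i by (intro sum.cong) auto

lemma frob_rows:
  fixes A :: "real mat"
  assumes A: "A \<in> carrier_mat r c"
  shows "(frob_norm A)^2 = (\<Sum>i<r. row A i \<bullet> row A i)"
  unfolding frob_sq using A row_self_sum[OF A] by (intro sum.cong) auto

lemma rows_swap:
  fixes A :: "real mat"
  assumes A: "A \<in> carrier_mat r c"
  shows "(\<Sum>i<r. row A i \<bullet> row A i) = (\<Sum>j<c. \<Sum>i<r. (A $$ (i,j))^2)"
proof -
  have "(\<Sum>i<r. row A i \<bullet> row A i) = (\<Sum>i<r. \<Sum>j<c. (A $$ (i,j))^2)"
    using row_self_sum[OF A] by (intro sum.cong) auto
  also have "\<dots> = (\<Sum>j<c. \<Sum>i<r. (A $$ (i,j))^2)" by (rule sum.swap)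
  finally show ?thesis .
qed

lemma row_mult_T:
  fixes A B :: "real mat"
  assumes A: "A \<in> carrier_mat r k" and B: "B \<in> carrier_mat k c" and i: "i < r"
  shows "row (A * B) i = transpose_mat B *\<^sub>v row A i"
proof (rule eq_vecI)
  show "dim_vec (row (A * B) i) = dim_vec (transpose_mat B *\<^sub>v row A i)" using A B by simp
  fix j assume "j < dim_vec (transpose_mat B *\<^sub>v row A i)"
  then have j: "j < c" using B by simp
  show "row (A * B) i $ j = (transpose_mat B *\<^sub>v row A i) $ j"
    using A B i j by (simp add: comm_scalar_prod[of _ k])
qed

lemma spec_transpose_orth:
  fixes X :: "real mat"
  assumes X: "X \<in> carrier_mat n m" and XX: "X * transpose_mat X = 1\<^sub>m n" and n: "n > 0"
  shows "spec_norm (transpose_mat X) = 1"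
proof -
  have XT: "transpose_mat X \<in> carrier_mat m n" using X by simp
  have iso: "(transpose_mat X *\<^sub>v v) \<bullet> (transpose_mat X *\<^sub>v v) = v \<bullet> v" if v: "v \<in> carrier_vec n" for v
  proof -
    have xv: "transpose_mat X *\<^sub>v v \<in> carrier_vec m" using XT v by simp
    have "(transpose_mat X *\<^sub>v v) \<bullet> (transpose_mat X *\<^sub>v v) = (X *\<^sub>v (transpose_mat X *\<^sub>v v)) \<bullet> v"
      using mat_vec_scal[OF X v xv] by simp
    also have "X *\<^sub>v (transpose_mat X *\<^sub>v v) = v" using XX X XT v
      by (metis assoc_mult_mat_vec one_mult_mat_vec)
    finally show ?thesis .
  qed
  define T where "T = {vnorm (transpose_mat X *\<^sub>v v) | v. v \<in> carrier_vec (dim_col (transpose_mat X)) \<and> vnorm v \<le> 1}"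
  have dT: "dim_col (transpose_mat X) = n" using X by simp
  have T: "T = {vnorm v | v. v \<in> carrier_vec n \<and> vnorm v \<le> 1}"
    unfolding T_def dT vnorm_def using iso by metis
  have u: "unit_vec n 0 \<in> carrier_vec n" "vnorm (unit_vec n 0) = 1" using n by (auto simp: vnorm_def)
  have "Sup T = 1"
  proof (rule cSup_eq_maximum)
    show "1 \<in> T" unfolding T using u by force
    show "\<And>x. x \<in> T \<Longrightarrow> x \<le> 1" unfolding T by auto
  qed
  then show ?thesis unfolding spec_norm_def T_def .
qed

theorem lemma3p8:
  fixes X :: "real mat" and n m k :: nat and S :: "nat set"
  assumes X: "X \<in> carrier_mat n m" and nm: "n \<le> m" and fr: "full_rank X"
    and S: "S \<subseteq> {0..<m}" and cardS: "card S = k" and nk: "n \<le> k" and km: "k \<le> m"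
    and frS: "full_rank (cols_sub X S)"
  shows "((frob_norm (pinv (cols_sub X S)))^2 =
           (\<Sum>i<n. det (cols_sub (del_row X i) S * transpose_mat (cols_sub (del_row X i) S)))
           / det (cols_sub X S * transpose_mat (cols_sub X S))) \<and>
         (k = n \<longrightarrow>
           (frob_norm (pinv (cols_sub X S)))^2 \<le>
           (spec_norm (pinv X))^2 *
           ((\<Sum>j<m. \<Sum>i<n. (det (replace_col (cols_sub X S) (col X j) i))^2)
            / (det (cols_sub X S))^2)) \<and>
         (k = n \<longrightarrow> X * transpose_mat X = 1\<^sub>m n \<longrightarrow>
           (frob_norm (pinv (cols_sub X S)))^2 =
           (spec_norm (pinv X))^2 *
           ((\<Sum>j<m. \<Sum>i<n. (det (replace_col (cols_sub X S) (col X j) i))^2)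
            / (det (cols_sub X S))^2))"
proof -
  define XS where "XS = cols_sub X S"
  have cS: "card {j. j < m \<and> j \<in> S} = k"
  proof -
    have "{j. j < m \<and> j \<in> S} = S" using S by auto
    then show ?thesis using cardS by simp
  qed
  have XS: "XS \<in> carrier_mat n k" unfolding XS_def using cols_sub_dims[OF X, of S] cS by simp
  have rXS: "vec_space.rank n XS = n"
    using frS XS nk unfolding full_rank_def XS_def[symmetric] by simp
  have dS: "det (XS * transpose_mat XS) \<noteq> 0" by (rule gram_det_nz[OF XS rXS])
  have part1: "(frob_norm (pinv XS))^2 =
           (\<Sum>i<n. det (cols_sub (del_row X i) S * transpose_mat (cols_sub (del_row X i) S)))
           / det (XS * transpose_mat XS)"
  proof -
    have "(\<Sum>i<n. det (mat_delete (XS * transpose_mat XS) i i)) =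
          (\<Sum>i<n. det (cols_sub (del_row X i) S * transpose_mat (cols_sub (del_row X i) S)))"
      by (rule sum.cong[OF refl]) (simp add: del_cols_gram[OF X] XS_def)
    then show ?thesis using part1_core[OF XS dS] by simp
  qed
  have rX: "vec_space.rank n X = n" using fr X nm unfolding full_rank_def by simp
  have dX: "det (X * transpose_mat X) \<noteq> 0" by (rule gram_det_nz[OF X rX])
  define P where "P = pinv X"
  define GX where "GX = X * transpose_mat X"
  define HX where "HX = (1 / det GX) \<cdot>\<^sub>m adj_mat GX"
  note PX = pinv_full_row[OF X dX, folded GX_def, folded HX_def, folded P_def]
  have P: "P \<in> carrier_mat m n" using PX(5) PX(1) X by simp
  define R where "R = (\<Sum>j<m. \<Sum>i<n. (det (replace_col XS (col X j) i))^2) / (det XS)^2"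
  have part23: "(frob_norm (pinv XS))^2 \<le> (spec_norm P)^2 * R \<and>
      (X * transpose_mat X = 1\<^sub>m n \<longrightarrow> (frob_norm (pinv XS))^2 = (spec_norm P)^2 * R)" if kn: "k = n"
  proof -
    have XSn: "XS \<in> carrier_mat n n" using XS kn by simp
    define Q where "Q = pinv XS"
    note PS = pinv_full_row[OF XS dS, folded Q_def]
    have Q: "Q \<in> carrier_mat n n" using PS(5) PS(1) XS kn by simp
    have XQ: "XS * Q = 1\<^sub>m n" using PS(6) .
    have QX: "Q * XS = 1\<^sub>m n" by (rule mat_mult_left_right_inverse[OF XSn Q XQ])
    have "det XS * det Q = 1" using det_mult[OF XSn Q] XQ by simp
    then have d0: "det XS \<noteq> 0" by auto
    define B where "B = Q * X"
    have B: "B \<in> carrier_mat n m" unfolding B_def using Q X by simp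
    have BP: "B * P = Q" unfolding B_def using Q X P PX(6) by simp
    have Bij: "(det (replace_col XS (col X j) i))^2 = (B $$ (i,j))^2 * (det XS)^2" if j: "j < m" and i: "i < n" for i j
    proof -
      define x where "x = Q *\<^sub>v col X j"
      have cX: "col X j \<in> carrier_vec n" using X j by simp
      have x: "x \<in> carrier_vec n" unfolding x_def using Q cX by simp
      have "XS *\<^sub>v x = col X j" unfolding x_def using XSn Q cX XQ
        by (metis assoc_mult_mat_vec one_mult_mat_vec)
      then have "det (replace_col XS (col X j) i) = x $ i * det XS"
        using cramer_lemma_mat[OF XSn x i] by simp
      also have "x $ i = B $$ (i,j)" unfolding x_def B_def using Q X i j by simp
      finally show ?thesis by (simp add: power_mult_distrib)
    qed
    have Rsum: "R = (\<Sum>j<m. \<Sum>i<n. (B $$ (i,j))^2)"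
    proof -
      have "(\<Sum>j<m. \<Sum>i<n. (det (replace_col XS (col X j) i))^2) = (\<Sum>j<m. \<Sum>i<n. (B $$ (i,j))^2) * (det XS)^2"
        using Bij by (simp add: sum_distrib_right)
      then show ?thesis unfolding R_def using d0 by simp
    qed
    have RB: "R = (\<Sum>i<n. row B i \<bullet> row B i)" unfolding Rsum using rows_swap[OF B] by simp
    have rowQ: "row Q i = transpose_mat P *\<^sub>v row B i" if "i < n" for i
      using row_mult_T[OF B P that] BP by simp
    have fQ: "(frob_norm Q)^2 = (\<Sum>i<n. row Q i \<bullet> row Q i)" by (rule frob_rows[OF Q])
    have ineq: "(frob_norm Q)^2 \<le> (spec_norm P)^2 * R"
    proof -
      have "(\<Sum>i<n. row Q i \<bullet> row Q i) \<le> (\<Sum>i<n. (spec_norm P)^2 * (row B i \<bullet> row B i))"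
      proof (rule sum_mono)
        fix i assume "i \<in> {..<n}"
        then have i: "i < n" by simp
        have "row B i \<in> carrier_vec m" using B i by simp
        then show "row Q i \<bullet> row Q i \<le> (spec_norm P)^2 * (row B i \<bullet> row B i)"
          unfolding rowQ[OF i] by (rule spec_le_T[OF P])
      qed
      then show ?thesis unfolding fQ RB by (simp add: sum_distrib_left)
    qed
    have eq: "(frob_norm Q)^2 = (spec_norm P)^2 * R" if XX: "X * transpose_mat X = 1\<^sub>m n"
    proof -
      have XT: "transpose_mat X \<in> carrier_mat m n" using X by simp
      have rowB: "row B i \<bullet> row B i = row Q i \<bullet> row Q i" if i: "i < n" for i
      proof -
        define q where "q = row Q i"
        have q: "q \<in> carrier_vec n" unfolding q_def using Q i by simp
        have rb: "row B i = transpose_mat X *\<^sub>v q" unfolding q_def B_def by (rule row_mult_T[OF Q X i])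
        have xq: "transpose_mat X *\<^sub>v q \<in> carrier_vec m" using XT q by simp
        have "(transpose_mat X *\<^sub>v q) \<bullet> (transpose_mat X *\<^sub>v q) = (X *\<^sub>v (transpose_mat X *\<^sub>v q)) \<bullet> q"
          using mat_vec_scal[OF X q xq] by simp
        also have "X *\<^sub>v (transpose_mat X *\<^sub>v q) = q" using XX X XT q
          by (metis assoc_mult_mat_vec one_mult_mat_vec)
        finally show ?thesis unfolding rb q_def .
      qed
      have fR: "(frob_norm Q)^2 = R" unfolding fQ RB using rowB by simp
      show ?thesis
      proof (cases "n = 0")
        case True
        then have "R = 0" unfolding Rsum by simp
        then show ?thesis using fR by simp
      next
        case False
        have "GX = 1\<^sub>m n" unfolding GX_def by (rule XX)
        then have "HX = 1\<^sub>m n" using PX(2) PX(1) by simp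
        then have "P = transpose_mat X" using PX(5) XT by simp
        then have "spec_norm P = 1" using spec_transpose_orth[OF X XX] False by simp
        then show ?thesis using fR by simp
      qed
    qed
    show ?thesis using ineq eq unfolding Q_def by blast
  qed
  show ?thesis using part1 part23 unfolding XS_def R_def P_def by blast
qed

end
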